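(* Let $\Omega$ be a finite set and let $u,v \in \mathrm{Sym}(\Omega)$. Let $\Phi\subseteq \mathrm{fix}([u,v]) \cap \mathrm{supp}(u)$ and $\Psi \subseteq \mathrm{supp}(v u v^{-1})\cap \mathrm{supp}(u)$. Then $$|\mathrm{supp}([u,v])| \le 2|\mathrm{supp}(u)| - |\Phi| - |\Psi|.$$
   Context: Permutations act on the right, written $\alpha^{u}$, and products are composed left to right: $\alpha^{uv}=(\alpha^u)^v$. The commutator is $[u,v] = uvu^{-1}v^{-1}$. For a permutation $x$, $\mathrm{supp}(x)=\{\alpha\in\Omega \mid \alpha^x\neq\alpha\}$ and $\mathrm{fix}(x)=\{\alpha\in\Omega\mid \alpha^x=\alpha\}$. *)

theory Defs
  imports "HOL-Combinatorics.Permutations"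
begin

(* Permutations act on the right and are composed left to right:
   a^(uv) = (a^u)^v.  As HOL functions, the product uv is  v o u. *)

definition rmul :: "('a \<Rightarrow> 'a) \<Rightarrow> ('a \<Rightarrow> 'a) \<Rightarrow> ('a \<Rightarrow> 'a)" where
  "rmul u v = v \<circ> u"

definition comm :: "('a \<Rightarrow> 'a) \<Rightarrow> ('a \<Rightarrow> 'a) \<Rightarrow> ('a \<Rightarrow> 'a)" where
  "comm u v = rmul (rmul (rmul u v) (inv u)) (inv v)"

definition supp :: "'a set \<Rightarrow> ('a \<Rightarrow> 'a) \<Rightarrow> 'a set" where
  "supp \<Omega> x = {a \<in> \<Omega>. x a \<noteq> a}"

definition fixset :: "'a set \<Rightarrow> ('a \<Rightarrow> 'a) \<Rightarrow> 'a set" where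
  "fixset \<Omega> x = {a \<in> \<Omega>. x a = a}"

end

theory Submission
  imports Defs
begin

theorem lemma2p1:
  fixes \<Omega> :: "'a set" and u v :: "'a \<Rightarrow> 'a" and \<Phi> \<Psi> :: "'a set"
  assumes "finite \<Omega>"
    and "u permutes \<Omega>" and "v permutes \<Omega>"
    and "\<Phi> \<subseteq> fixset \<Omega> (comm u v) \<inter> supp \<Omega> u"
    and "\<Psi> \<subseteq> supp \<Omega> (rmul (rmul v u) (inv v)) \<inter> supp \<Omega> u"
  shows "int (card (supp \<Omega> (comm u v)))
           \<le> 2 * int (card (supp \<Omega> u)) - int (card \<Phi>) - int (card \<Psi>)"
proof -
  define w where "w = rmul (rmul v u) (inv v)"
  define A where "A = supp \<Omega> u"
  define B where "B = supp \<Omega> w"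
  define C where "C = supp \<Omega> (comm u v)"
  have fin: "finite A" "finite B" "finite C" "finite \<Phi>" "finite \<Psi>"
    using assms(1,4,5) unfolding A_def B_def C_def supp_def w_def
    by (auto intro: finite_subset)
  have bv: "bij v" using assms(3) permutes_bij by blast
  have bu: "bij u" using assms(2) permutes_bij by blast
  have iv: "inv v (v x) = x" for x using bv by (simp add: bij_is_inj inv_f_f)
  have vi: "v (inv v x) = x" for x using bv by (simp add: bij_is_surj surj_f_inv_f)
  have iu: "inv u (u x) = x" for x using bu by (simp add: bij_is_inj inv_f_f)
  have wa: "w a = inv v (u (v a))" for a by (simp add: w_def rmul_def)
  have ca: "comm u v a = inv v (inv u (v (u a)))" for a by (simp add: comm_def rmul_def)
  have "v ` B = A"
  proof
    show "v ` B \<subseteq> A"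
    proof
      fix y assume "y \<in> v ` B"
      then obtain b where b: "b \<in> B" "y = v b" by blast
      have "b \<in> \<Omega>" "inv v (u (v b)) \<noteq> b" using b unfolding B_def supp_def wa by auto
      hence "v b \<in> \<Omega>" "u (v b) \<noteq> v b" using assms(3) iv
        by (auto simp: permutes_in_image)
      thus "y \<in> A" using b unfolding A_def supp_def by auto
    qed
    show "A \<subseteq> v ` B"
    proof
      fix a assume a: "a \<in> A"
      have "a \<in> \<Omega>" "u a \<noteq> a" using a unfolding A_def supp_def by auto
      have "inv v a \<in> \<Omega>" using \<open>a \<in> \<Omega>\<close> assms(3)
        by (simp add: permutes_inv permutes_in_image)
      moreover have "w (inv v a) \<noteq> inv v a"
      proof
        assume "w (inv v a) = inv v a"
        hence "inv v (u a) = inv v a" using wa vi by simp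
        hence "v (inv v (u a)) = v (inv v a)" by simp
        thus False using vi \<open>u a \<noteq> a\<close> by simp
      qed
      ultimately have "inv v a \<in> B" unfolding B_def supp_def by auto
      moreover have "a = v (inv v a)" using vi by simp
      ultimately show "a \<in> v ` B" by blast
    qed
  qed
  hence cB: "card B = card A" using bv
    by (metis bij_is_inj card_image inj_on_subset subset_UNIV)
  have sub: "C \<subseteq> (A \<union> B) - \<Phi>"
  proof
    fix a assume a: "a \<in> C"
    have "a \<notin> \<Phi>" using a assms(4) unfolding C_def fixset_def supp_def by auto
    moreover have "a \<in> A \<union> B"
    proof (rule ccontr)
      assume "a \<notin> A \<union> B"
      hence "u a = a" "w a = a" using a unfolding A_def B_def C_def supp_def by auto
      hence "inv v (u (v a)) = a" using wa by simp
      hence "v (inv v (u (v a))) = v a" by simp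
      hence "u (v a) = v a" using vi by simp
      hence "inv u (v a) = v a" using iu by (metis)
      hence "comm u v a = a" using ca \<open>u a = a\<close> iv by simp
      thus False using a unfolding C_def supp_def by auto
    qed
    ultimately show "a \<in> (A \<union> B) - \<Phi>" by blast
  qed
  have "card C \<le> card ((A \<union> B) - \<Phi>)" using fin sub by (simp add: card_mono)
  also have "\<dots> = card (A \<union> B) - card \<Phi>"
    using assms(4) fin unfolding A_def by (subst card_Diff_subset) auto
  finally have 0: "card C \<le> card (A \<union> B) - card \<Phi>" .
  have 1: "card \<Phi> \<le> card (A \<union> B)"
    using assms(4) fin unfolding A_def by (intro card_mono) auto
  have 2: "card (A \<union> B) + card (A \<inter> B) = card A + card B"
    using fin card_Un_Int by metis
  have 3: "card \<Psi> \<le> card (A \<inter> B)" using assms(5) fin unfolding A_def B_def w_def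
    by (intro card_mono) auto
  show ?thesis using 0 1 2 3 cB unfolding A_def C_def by linarith
qed

end
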